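(* Let $n,m>3$ be integers and let $\psi$ be an automorphism of $\mathcal{CSR}(m,n)$. Then there are $m$ permutations $\psi_1,\dots,\psi_m$ of $\mathbb{Z}_n$ and a permutation $\sigma$ of $[m]$ such that $\psi\big(\sum_i x_i e_i\big)=\sum_i \psi_i(x_i)e_{\sigma(i)}$ for every vertex $\sum_i x_ie_i$ of $\mathcal{CSR}(m,n)$.
   Context: For positive integers $m,n$, the cyclic simplicial rook graph $\mathcal{CSR}(m,n)$ is the graph whose vertices are the vectors $(a_1,\dots,a_m)\in\mathbb{Z}_n^m$ with $a_1+\cdots+a_m\equiv 0 \pmod n$, two vertices being adjacent if and only if their vectors differ in exactly two coordinates. $[m]=\{1,\dots,m\}$ and $e_i\in\mathbb{Z}_n^m$ is the vector with $1$ in coordinate $i$ and $0$ elsewhere. *)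

theory Defs
  imports Main
begin

text \<open>Vertices of CSR(m,n): vectors indexed by coordinates 0..m-1 (standing for [m]),
  entries in {0..n-1} (standing for Z_n), extended by 0 outside the index range,
  with coordinate sum congruent to 0 mod n.\<close>
definition csr_vertices :: "nat \<Rightarrow> nat \<Rightarrow> (nat \<Rightarrow> nat) set" where
  "csr_vertices m n = {x. (\<forall>i<m. x i < n) \<and> (\<forall>i\<ge>m. x i = 0) \<and> (\<Sum>i<m. x i) mod n = 0}"

definition csr_adj :: "nat \<Rightarrow> (nat \<Rightarrow> nat) \<Rightarrow> (nat \<Rightarrow> nat) \<Rightarrow> bool" where
  "csr_adj m x y \<longleftrightarrow> card {i. i < m \<and> x i \<noteq> y i} = 2"

definition csr_automorphism :: "nat \<Rightarrow> nat \<Rightarrow> ((nat \<Rightarrow> nat) \<Rightarrow> (nat \<Rightarrow> nat)) \<Rightarrow> bool" where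
  "csr_automorphism m n \<psi> \<longleftrightarrow>
     bij_betw \<psi> (csr_vertices m n) (csr_vertices m n) \<and>
     (\<forall>x\<in>csr_vertices m n. \<forall>y\<in>csr_vertices m n. csr_adj m (\<psi> x) (\<psi> y) \<longleftrightarrow> csr_adj m x y)"

end

theory Submission
  imports Defs "HOL-Number_Theory.Cong"
begin

locale csr =
  fixes m n :: nat
  assumes m3: "m > 3" and n3: "n > 3"
begin

abbreviation V where "V \<equiv> csr_vertices m n"
definition dif :: "(nat \<Rightarrow> nat) \<Rightarrow> (nat \<Rightarrow> nat) \<Rightarrow> nat set" where
  "dif x y = {i. i < m \<and> x i \<noteq> y i}"
abbreviation adj where "adj \<equiv> csr_adj m"

lemma adj_iff: "adj x y \<longleftrightarrow> card (dif x y) = 2"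
  by (simp add: csr_adj_def dif_def)

lemma dif_sym: "dif x y = dif y x" by (auto simp: dif_def)
lemma dif_fin[simp]: "finite (dif x y)" by (simp add: dif_def)
lemma dif_lt: "k \<in> dif x y \<Longrightarrow> k < m" by (simp add: dif_def)
lemma dif_iff: "k \<in> dif x y \<longleftrightarrow> k < m \<and> x k \<noteq> y k" by (simp add: dif_def)
lemma adj_sym: "adj x y \<Longrightarrow> adj y x" by (simp add: adj_iff dif_sym)

lemma inV: "x \<in> V \<longleftrightarrow> (\<forall>i<m. x i < n) \<and> (\<forall>i\<ge>m. x i = 0) \<and> (\<Sum>i<m. x i) mod n = 0"
  by (simp add: csr_vertices_def)

lemma V_eq: "x \<in> V \<Longrightarrow> y \<in> V \<Longrightarrow> dif x y = {} \<Longrightarrow> x = y"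
proof (rule ext)
  fix i assume a: "x \<in> V" "y \<in> V" "dif x y = {}"
  show "x i = y i"
  proof (cases "i < m")
    case True then show ?thesis using a(3) by (auto simp: dif_def)
  next
    case False then show ?thesis using a(1,2) by (auto simp: inV)
  qed
qed

lemma sum_split: "i < m \<Longrightarrow> (\<Sum>k<m. f k) = f i + (\<Sum>k\<in>{..<m}-{i}. f k)"
  by (simp add: sum.remove)

lemma one_coord: assumes "x \<in> V" "y \<in> V" "dif x y \<subseteq> {i}" shows "x = y"
proof (cases "i \<in> dif x y")
  case False
  then have "dif x y = {}" using assms(3) by blast
  then show ?thesis using V_eq assms(1,2) by blast
next
  case True
  then have im: "i < m" by (simp add: dif_def)
  have eq: "(\<Sum>k\<in>{..<m}-{i}. x k) = (\<Sum>k\<in>{..<m}-{i}. y k)"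
    by (rule sum.cong) (use assms in \<open>auto simp: dif_def\<close>)
  have "(x i + (\<Sum>k\<in>{..<m}-{i}. x k)) mod n = 0" using assms(1) im sum_split[of i x] by (simp add: inV)
  moreover have "(y i + (\<Sum>k\<in>{..<m}-{i}. x k)) mod n = 0" using assms(2) im sum_split[of i y] eq by (simp add: inV)
  ultimately have "[x i + (\<Sum>k\<in>{..<m}-{i}. x k) = y i + (\<Sum>k\<in>{..<m}-{i}. x k)] (mod n)"
    by (simp add: cong_def)
  then have "[x i = y i] (mod n)" by (simp add: cong_add_rcancel_nat)
  moreover have "x i < n" "y i < n" using assms im by (auto simp: inV)
  ultimately have "x i = y i" by (simp add: cong_def)
  then have "dif x y = {}" using assms by (auto simp: dif_def)
  then show ?thesis using V_eq assms(1,2) by blast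
qed

lemma card_dif_not1: "x \<in> V \<Longrightarrow> y \<in> V \<Longrightarrow> card (dif x y) \<noteq> 1"
proof
  assume a: "x \<in> V" "y \<in> V" "card (dif x y) = 1"
  from a(3) obtain i where "dif x y = {i}" by (rule card_1_singletonE)
  then have "x = y" using one_coord[OF a(1,2)] by blast
  then show False using a(3) by (simp add: dif_def)
qed


lemma adj_ne: "adj x y \<Longrightarrow> x \<noteq> y"
  by (auto simp: adj_iff dif_def)

lemma sub2_adj:
  assumes "p \<in> V" "q \<in> V" "p \<noteq> q" "dif p q \<subseteq> {i,j}" "i \<noteq> j"
  shows "adj p q \<and> dif p q = {i,j}"
proof -
  have ne: "dif p q \<noteq> {}" using V_eq assms(1,2,3) by blast
  have le: "card (dif p q) \<le> 2" using card_mono[OF _ assms(4)] assms(5) by simp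
  have "card (dif p q) \<noteq> 1" using card_dif_not1 assms(1,2) by blast
  moreover have "card (dif p q) \<noteq> 0" using ne by simp
  ultimately have c2: "card (dif p q) = 2" using le by linarith
  then have "dif p q = {i,j}" using card_subset_eq[OF _ assms(4)] assms(5) by simp
  then show ?thesis using c2 by (simp add: adj_iff)
qed

lemma dif_via: "k \<notin> dif x p \<Longrightarrow> k \<notin> dif x q \<Longrightarrow> k \<notin> dif p q"
  by (auto simp: dif_def)

lemma same_line:
  assumes "p \<in> V" "q \<in> V" "dif x p \<subseteq> {i,j}" "dif x q \<subseteq> {i,j}" "i \<noteq> j"
  shows "p = q \<or> adj p q"
proof -
  have "dif p q \<subseteq> {i,j}" using assms(3,4) dif_via by blast
  then show ?thesis using sub2_adj assms by blast
qed

lemma dif_un: "dif y z \<subseteq> dif x y \<union> dif x z"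
  by (auto simp: dif_def)
lemma dif_sd: "dif x y - dif x z \<subseteq> dif y z"
  by (auto simp: dif_def)

lemma NC_core:
  assumes "adj y z" "dif x y = {a,b}" "dif x z = {a,c}" "a \<noteq> b" "a \<noteq> c" "b \<noteq> c"
  shows "y a = z a \<and> dif y z = {b,c}"
proof -
  have "b \<in> dif y z" using dif_sd[of x y z] assms by auto
  moreover have "c \<in> dif y z" using dif_sd[of x z y] assms by (auto simp: dif_sym)
  ultimately have sub: "{b,c} \<subseteq> dif y z" by auto
  have "card (dif y z) = 2" using assms(1) by (simp add: adj_iff)
  then have eq: "dif y z = {b,c}" using card_subset_eq[OF _ sub] assms(6) by simp
  have "a \<in> dif x y" using assms(2) by simp
  then have "a < m" by (rule dif_lt)
  then have "y a = z a" using eq assms(4,5) by (auto simp: dif_def)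
  then show ?thesis using eq by simp
qed

lemma NC:
  assumes "adj x y" "adj x z" "adj y z" "dif x y \<noteq> dif x z"
  shows "\<exists>a b c. dif x y = {a,b} \<and> dif x z = {a,c} \<and> a \<noteq> b \<and> a \<noteq> c \<and> b \<noteq> c \<and> y a = z a \<and> dif y z = {b,c}"
proof -
  obtain p q where pq: "dif x y = {p,q}" "p \<noteq> q" using assms(1) by (auto simp: adj_iff card_2_iff)
  obtain r s where rs: "dif x z = {r,s}" "r \<noteq> s" using assms(2) by (auto simp: adj_iff card_2_iff)
  show ?thesis
  proof (cases "p = r")
    case True
    then have "q \<noteq> s" using pq rs assms(4) by auto
    then show ?thesis using NC_core[OF assms(3), of x p q s] pq rs True by auto
  next
    case pr: False
    show ?thesis
    proof (cases "p = s")
      case True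
      then have "q \<noteq> r" using pq rs assms(4) by auto
      then have "dif x z = {p,r}" using rs True by auto
      then show ?thesis using NC_core[OF assms(3), of x p q r] pq rs True \<open>q \<noteq> r\<close> by auto
    next
      case ps: False
      show ?thesis
      proof (cases "q = r")
        case True
        then have "dif x y = {q,p}" using pq by auto
        then show ?thesis using NC_core[OF assms(3), of x q p s] pq rs True ps by auto
      next
        case qr: False
        show ?thesis
        proof (cases "q = s")
          case True
          then have "dif x y = {q,p}" "dif x z = {q,r}" using pq rs by auto
          then show ?thesis using NC_core[OF assms(3), of x q p r] pq rs True pr by auto
        next
          case qs: False
          have "{p,q,r,s} \<subseteq> dif y z"
            using dif_sd[of x y z] dif_sd[of x z y] pq rs pr ps qr qs by (auto simp: dif_sym)
          then have "card {p,q,r,s} \<le> card (dif y z)" by (intro card_mono) simp_all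
          moreover have "card {p,q,r,s} = 4" using pq(2) rs(2) pr ps qr qs by simp
          ultimately have "card (dif y z) \<ge> 4" by linarith
          then show ?thesis using assms(3) by (simp add: adj_iff)
        qed
      qed
    qed
  qed
qed


definition lp :: "(nat \<Rightarrow> nat) \<Rightarrow> nat \<Rightarrow> nat \<Rightarrow> nat \<Rightarrow> nat \<Rightarrow> nat" where
  "lp x i j v = x(i := v, j := (x i + x j + n - v) mod n)"

lemma sum_two:
  assumes "i < m" "j < m" "i \<noteq> j"
  shows "(\<Sum>k<m. g k) = g i + g j + (\<Sum>k\<in>{..<m}-{i,j}. g k)"
proof -
  have "(\<Sum>k<m. g k) = g i + (\<Sum>k\<in>{..<m}-{i}. g k)" using assms by (simp add: sum.remove)
  moreover have "(\<Sum>k\<in>{..<m}-{i}. g k) = g j + (\<Sum>k\<in>{..<m}-{i}-{j}. g k)"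
    using assms by (intro sum.remove) auto
  moreover have "{..<m}-{i}-{j} = {..<m}-{i,j}" by auto
  ultimately show ?thesis by (simp add: add.assoc)
qed

lemma sum_upd:
  assumes "i < m" "j < m" "i \<noteq> j"
  shows "(\<Sum>k<m. (f(i:=a, j:=b)) k) + f i + f j = (\<Sum>k<m. f k) + a + b"
proof -
  have r: "(\<Sum>k\<in>{..<m}-{i,j}. (f(i:=a, j:=b)) k) = (\<Sum>k\<in>{..<m}-{i,j}. f k)"
    by (rule sum.cong) auto
  show ?thesis using sum_two[OF assms, of "f(i:=a, j:=b)"] sum_two[OF assms, of f] r assms(3) by (simp add: ac_simps)
qed

lemma npos: "n > 0" using n3 by simp

lemma lp_V:
  assumes "x \<in> V" "i < m" "j < m" "i \<noteq> j" "v < n"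
  shows "lp x i j v \<in> V"
proof -
  let ?w = "(x i + x j + n - v) mod n"
  have eq: "(\<Sum>k<m. lp x i j v k) + x i + x j = (\<Sum>k<m. x k) + v + ?w"
    unfolding lp_def by (rule sum_upd[OF assms(2-4)])
  have "(v + ?w) mod n = (v + (x i + x j + n - v)) mod n" by (simp add: mod_add_right_eq)
  also have "v + (x i + x j + n - v) = (x i + x j) + n" using assms(5) by simp
  finally have vw: "(v + ?w) mod n = (x i + x j) mod n" by simp
  have sx: "(\<Sum>k<m. x k) mod n = 0" using assms(1) by (simp add: inV)
  have "((\<Sum>k<m. lp x i j v k) + (x i + x j)) mod n = ((\<Sum>k<m. x k) + (v + ?w)) mod n"
    using eq by (simp add: add.assoc)
  also have "\<dots> = ((\<Sum>k<m. x k) mod n + (v + ?w) mod n) mod n" by (simp add: mod_add_eq)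
  also have "\<dots> = (0 + (x i + x j)) mod n" using sx vw by simp
  finally have "[(\<Sum>k<m. lp x i j v k) + (x i + x j) = 0 + (x i + x j)] (mod n)" by (simp add: cong_def)
  then have "[(\<Sum>k<m. lp x i j v k) = 0] (mod n)" by (simp only: cong_add_rcancel_nat)
  then have s: "(\<Sum>k<m. lp x i j v k) mod n = 0" by (simp add: cong_def)
  have "\<forall>k<m. lp x i j v k < n" using assms(1,5) npos by (auto simp: lp_def inV)
  moreover have "\<forall>k\<ge>m. lp x i j v k = 0" using assms(1-3) by (auto simp: lp_def inV)
  ultimately show ?thesis using s by (simp add: inV)
qed

lemma lp_i: "i \<noteq> j \<Longrightarrow> lp x i j v i = v" by (simp add: lp_def)
lemma lp_o: "k \<noteq> i \<Longrightarrow> k \<noteq> j \<Longrightarrow> lp x i j v k = x k" by (simp add: lp_def)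
lemma lp_dif: "dif x (lp x i j v) \<subseteq> {i,j}" by (auto simp: lp_def dif_def)

lemma lp_line:
  assumes "x \<in> V" "i < m" "j < m" "i \<noteq> j" "v < n" "v \<noteq> x i"
  shows "lp x i j v \<in> V" "dif x (lp x i j v) = {i,j}" "adj x (lp x i j v)"
proof -
  show V: "lp x i j v \<in> V" using lp_V assms by blast
  have "lp x i j v \<noteq> x" using lp_i[OF assms(4)] assms(6) by metis
  then show "dif x (lp x i j v) = {i,j}" "adj x (lp x i j v)" using sub2_adj[OF assms(1) V _ lp_dif assms(4)] by auto
qed

lemma line_sum:
  assumes "x \<in> V" "p \<in> V" "i < m" "j < m" "i \<noteq> j" "dif x p \<subseteq> {i,j}"
  shows "(p i + p j) mod n = (x i + x j) mod n"
proof -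
  have pe: "p = x(i := p i, j := p j)"
  proof (rule ext)
    fix k show "p k = (x(i := p i, j := p j)) k"
    proof (cases "k = i \<or> k = j")
      case True then show ?thesis by auto
    next
      case False
      show ?thesis
      proof (cases "k < m")
        case True then show ?thesis using False assms(6) by (auto simp: dif_def)
      next
        case F: False then show ?thesis using False assms(1,2) by (auto simp: inV)
      qed
    qed
  qed
  have eq: "(\<Sum>k<m. p k) + x i + x j = (\<Sum>k<m. x k) + p i + p j"
    using sum_upd[OF assms(3-5), of x "p i" "p j"] pe by simp
  have sx: "(\<Sum>k<m. x k) mod n = 0" using assms(1) by (simp add: inV)
  have sp: "(\<Sum>k<m. p k) mod n = 0" using assms(2) by (simp add: inV)
  have "(x i + x j) mod n = ((\<Sum>k<m. p k) mod n + (x i + x j)) mod n" using sp by simp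
  also have "\<dots> = ((\<Sum>k<m. p k) + (x i + x j)) mod n" by (simp add: mod_add_left_eq)
  also have "\<dots> = ((\<Sum>k<m. x k) + (p i + p j)) mod n" using eq by (simp add: add.assoc)
  also have "\<dots> = ((\<Sum>k<m. x k) mod n + (p i + p j)) mod n" by (simp add: mod_add_left_eq)
  also have "\<dots> = (p i + p j) mod n" using sx by simp
  finally show ?thesis by simp
qed


lemma mod_shift_ne: assumes "0 < d" "d < n" shows "(b + d) mod n \<noteq> b mod n"
proof
  assume "(b + d) mod n = b mod n"
  then have "[b + d = b + 0] (mod n)" by (simp add: cong_def)
  then have "[d = 0] (mod n)" by (simp only: cong_add_lcancel_nat)
  then have "n dvd d" by (simp add: cong_0_iff)
  then show False using assms by (simp add: nat_dvd_not_less)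
qed

lemma avail2:
  assumes "finite F" "card F + 2 \<le> m"
  shows "\<exists>k l. k < m \<and> l < m \<and> k \<noteq> l \<and> k \<notin> F \<and> l \<notin> F"
proof -
  have "m - card F \<le> card ({..<m} - F)" using diff_card_le_card_Diff[OF assms(1), of "{..<m}"] by simp
  then have "2 \<le> card ({..<m} - F)" using assms(2) by linarith
  then obtain S where S: "S \<subseteq> {..<m} - F" "card S = 2" by (meson obtain_subset_with_card_n)
  then obtain k l where "S = {k,l}" "k \<noteq> l" by (auto simp: card_2_iff)
  then show ?thesis using S by auto
qed

lemma avail1:
  assumes "finite F" "card F + 1 \<le> m"
  shows "\<exists>k. k < m \<and> k \<notin> F"
proof -
  have "m - card F \<le> card ({..<m} - F)" using diff_card_le_card_Diff[OF assms(1), of "{..<m}"] by simp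
  then have "1 \<le> card ({..<m} - F)" using assms(2) by linarith
  then have "{..<m} - F \<noteq> {}" by (cases "{..<m} - F = {}") auto
  then show ?thesis by auto
qed

definition Cl where "Cl x y z = {w \<in> V. w = y \<or> w = z \<or> (adj w x \<and> adj w y \<and> adj w z)}"

definition P where "P x y z = (\<exists>u\<in>V. \<exists>v\<in>V. adj x u \<and> adj x v \<and> adj u v \<and>
    (\<forall>a\<in>Cl x y z. \<forall>b\<in>Cl x u v. a \<noteq> b \<and> \<not> adj a b))"

lemma Cl_coll:
  assumes V: "x \<in> V" "y \<in> V" "z \<in> V" and t: "adj x y" "adj x z" "adj y z"
    and c: "dif x y = dif x z" and w: "w \<in> Cl x y z"
  shows "dif x w = dif x y"
proof -
  have wV: "w \<in> V" using w by (simp add: Cl_def)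
  show ?thesis
  proof (cases "w = y \<or> w = z")
    case True then show ?thesis using c by auto
  next
    case False
    then have aw: "adj w x" "adj w y" "adj w z" using w by (auto simp: Cl_def)
    show ?thesis
    proof (rule ccontr)
      assume ne: "dif x w \<noteq> dif x y"
      obtain a b c where 1: "dif x y = {a,b}" "dif x w = {a,c}" "a \<noteq> b" "a \<noteq> c" "b \<noteq> c" "y a = w a"
        using NC[OF t(1) adj_sym[OF aw(1)] adj_sym[OF aw(2)] ne[symmetric]] by blast
      obtain a' b' c' where 2: "dif x z = {a',b'}" "dif x w = {a',c'}" "z a' = w a'"
        using NC[OF t(2) adj_sym[OF aw(1)] adj_sym[OF aw(3)]] ne c by metis
      have "a' \<in> {a,b}" "a' \<in> {a,c}" using 1 2 c by auto
      then have "a' = a" using 1 by auto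
      then have ya: "y a = z a" using 1 2 by simp
      have "dif y z \<subseteq> {b}"
      proof
        fix k assume k: "k \<in> dif y z"
        then have "k \<in> {a,b}" using dif_un[of y z x] 1 c by auto
        moreover have "k \<noteq> a" using k ya by (auto simp: dif_def)
        ultimately show "k \<in> {b}" by auto
      qed
      then have "y = z" using one_coord V by blast
      then show False using adj_ne t(3) by blast
    qed
  qed
qed

lemma Cl_V: "w \<in> Cl x y z \<Longrightarrow> w \<in> V" by (simp add: Cl_def)

lemma D1:
  assumes V: "x \<in> V" "y \<in> V" "z \<in> V" and t: "adj x y" "adj x z" "adj y z"
    and c: "dif x y = dif x z"
  shows "P x y z"
proof -
  obtain i j where ij: "dif x y = {i,j}" "i \<noteq> j" using t(1) by (auto simp: adj_iff card_2_iff)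
  have "card {i,j} + 2 \<le> m" using ij(2) m3 by simp
  then obtain k l where kl: "k < m" "l < m" "k \<noteq> l" "k \<notin> {i,j}" "l \<notin> {i,j}"
    using avail2[of "{i,j}"] by blast
  have xk: "x k < n" using V kl by (simp add: inV)
  define u where "u = lp x k l ((x k + 1) mod n)"
  define v where "v = lp x k l ((x k + 2) mod n)"
  have n1: "(x k + 1) mod n \<noteq> x k" using mod_shift_ne[of 1 "x k"] n3 xk by simp
  have n2: "(x k + 2) mod n \<noteq> x k" using mod_shift_ne[of 2 "x k"] n3 xk by simp
  have n12: "(x k + 1) mod n \<noteq> (x k + 2) mod n" using mod_shift_ne[of 1 "x k + 1"] n3 by simp
  have u: "u \<in> V" "dif x u = {k,l}" "adj x u" unfolding u_def using lp_line[OF V(1) kl(1,2,3) _ n1] npos by auto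
  have v: "v \<in> V" "dif x v = {k,l}" "adj x v" unfolding v_def using lp_line[OF V(1) kl(1,2,3) _ n2] npos by auto
  have "u \<noteq> v" using n12 lp_i[OF kl(3)] unfolding u_def v_def by metis
  then have uv: "adj u v" using same_line[OF u(1) v(1), of x k l] u v kl by auto
  have "\<forall>a\<in>Cl x y z. \<forall>b\<in>Cl x u v. a \<noteq> b \<and> \<not> adj a b"
  proof (intro ballI)
    fix a b assume a: "a \<in> Cl x y z" and b: "b \<in> Cl x u v"
    have da: "dif x a = {i,j}" using Cl_coll[OF V t c a] ij by simp
    have db: "dif x b = {k,l}" using Cl_coll[OF V(1) u(1) v(1) u(3) v(3) uv _ b] u v by simp
    have "{i,j,k,l} \<subseteq> dif a b" using dif_sd[of x a b] dif_sd[of x b a] da db kl by (auto simp: dif_sym)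
    then have "card {i,j,k,l} \<le> card (dif a b)" by (intro card_mono) simp_all
    moreover have "card {i,j,k,l} = 4" using ij(2) kl by auto
    ultimately have "\<not> adj a b" by (simp add: adj_iff)
    moreover have "a \<noteq> b" using da db kl by auto
    ultimately show "a \<noteq> b \<and> \<not> adj a b" by simp
  qed
  then show ?thesis unfolding P_def using u v uv by blast
qed


lemma dif_subI: "(\<And>k. k < m \<Longrightarrow> k \<notin> S \<Longrightarrow> p k = q k) \<Longrightarrow> dif p q \<subseteq> S"
  by (auto simp: dif_def)

lemma dif_out: "dif x y = S \<Longrightarrow> k < m \<Longrightarrow> k \<notin> S \<Longrightarrow> y k = x k"
  by (auto simp: dif_def)

lemma dif_in: "k \<in> dif x y \<Longrightarrow> y k \<noteq> x k"
  by (auto simp: dif_def)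

lemma star_Cl:
  assumes V: "x \<in> V" "y \<in> V" "z \<in> V" and t: "adj x y" "adj x z" "adj y z"
    and d: "dif x y = {a,b}" "dif x z = {a,c}" "a \<noteq> b" "a \<noteq> c" "b \<noteq> c" "y a = z a"
    and l: "l < m" "l \<noteq> a"
  shows "lp x a l (y a) \<in> Cl x y z" "dif x (lp x a l (y a)) = {a,l}"
proof -
  let ?s = "lp x a l (y a)"
  have ad: "a \<in> dif x y" using d(1) by simp
  have am: "a < m" using dif_lt[OF ad] .
  have ya: "y a < n" "y a \<noteq> x a" using V(2) am dif_in[OF ad] by (auto simp: inV)
  have s: "?s \<in> V" "dif x ?s = {a,l}" "adj x ?s" using lp_line[OF V(1) am l(1) l(2)[symmetric] ya] by auto
  show "dif x ?s = {a,l}" by (rule s(2))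
  have sa: "?s a = y a" using lp_i l(2) by metis
  have sl: "?s l \<noteq> x l" using dif_in[of l x ?s] s(2) by simp
  have so: "?s k = x k" if "k \<noteq> a" "k \<noteq> l" for k using lp_o that by metis
  have yo: "y k = x k" if "k < m" "k \<noteq> a" "k \<noteq> b" for k using dif_out[OF d(1) that(1)] that by simp
  have zo: "z k = x k" if "k < m" "k \<noteq> a" "k \<noteq> c" for k using dif_out[OF d(2) that(1)] that by simp
  show "?s \<in> Cl x y z"
  proof (cases "l = b")
    case True
    have "dif ?s y \<subseteq> {b}"
    proof (rule dif_subI)
      fix k assume k: "k < m" "k \<notin> {b}"
      show "?s k = y k"
      proof (cases "k = a")
        case True then show ?thesis using sa by simp
      next
        case False then show ?thesis using so[OF False] yo[OF k(1) False] k(2) \<open>l = b\<close> by simp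
      qed
    qed
    then have "?s = y" using one_coord s(1) V(2) by blast
    then show ?thesis using s(1) by (simp add: Cl_def)
  next
    case lb: False
    show ?thesis
    proof (cases "l = c")
      case True
      have "dif ?s z \<subseteq> {c}"
      proof (rule dif_subI)
        fix k assume k: "k < m" "k \<notin> {c}"
        show "?s k = z k"
        proof (cases "k = a")
          case True then show ?thesis using sa d(6) by simp
        next
          case False then show ?thesis using so[OF False] zo[OF k(1) False] k(2) \<open>l = c\<close> by simp
        qed
      qed
      then have "?s = z" using one_coord s(1) V(3) by blast
      then show ?thesis using s(1) by (simp add: Cl_def)
    next
      case lc: False
      have "dif ?s y \<subseteq> {l,b}"
      proof (rule dif_subI)
        fix k assume k: "k < m" "k \<notin> {l,b}"
        show "?s k = y k"
        proof (cases "k = a")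
          case True then show ?thesis using sa by simp
        next
          case False then show ?thesis using so[OF False] yo[OF k(1) False] k(2) by simp
        qed
      qed
      moreover have "?s \<noteq> y" using sl yo[OF l(1) l(2) lb] by metis
      ultimately have ay: "adj ?s y" using sub2_adj[OF s(1) V(2)] lb by blast
      have "dif ?s z \<subseteq> {l,c}"
      proof (rule dif_subI)
        fix k assume k: "k < m" "k \<notin> {l,c}"
        show "?s k = z k"
        proof (cases "k = a")
          case True then show ?thesis using sa d(6) by simp
        next
          case False then show ?thesis using so[OF False] zo[OF k(1) False] k(2) by simp
        qed
      qed
      moreover have "?s \<noteq> z" using sl zo[OF l(1) l(2) lc] by metis
      ultimately have az: "adj ?s z" using sub2_adj[OF s(1) V(3)] lc by blast
      have "adj ?s x" using adj_sym s(3) by blast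
      then show ?thesis using s(1) ay az by (simp add: Cl_def)
    qed
  qed
qed

lemma line_Cl:
  assumes V: "x \<in> V" "u \<in> V" "v \<in> V" and t: "adj x u" "adj x v" "adj u v"
    and d: "dif x u = {k,l}" "dif x v = {k,l}" "k \<noteq> l"
    and q: "q \<in> V" "dif x q \<subseteq> {k,l}" "q \<noteq> x"
  shows "q \<in> Cl x u v"
proof -
  have "adj q x" using sub2_adj[OF q(1) V(1) _ _ d(3)] q(2,3) dif_sym by metis
  moreover have "q = u \<or> adj q u" using same_line[OF q(1) V(2) q(2) _ d(3)] d(1) by simp
  moreover have "q = v \<or> adj q v" using same_line[OF q(1) V(3) q(2) _ d(3)] d(2) by simp
  ultimately show ?thesis using q(1) by (auto simp: Cl_def)
qed

lemma lp_ne_x: "dif x p = {a,l} \<Longrightarrow> p \<noteq> x"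
  by (auto simp: dif_def)

lemma D2:
  assumes V: "x \<in> V" "y \<in> V" "z \<in> V" and t: "adj x y" "adj x z" "adj y z"
    and c: "dif x y \<noteq> dif x z"
  shows "\<not> P x y z"
proof
  assume "P x y z"
  then obtain u v where uv: "u \<in> V" "v \<in> V" "adj x u" "adj x v" "adj u v"
    and H: "\<forall>a\<in>Cl x y z. \<forall>b\<in>Cl x u v. a \<noteq> b \<and> \<not> adj a b" unfolding P_def by blast
  obtain a b c where abc: "dif x y = {a,b}" "dif x z = {a,c}" "a \<noteq> b" "a \<noteq> c" "b \<noteq> c" "y a = z a"
    using NC[OF t c] by blast
  have am: "a < m" using abc(1) dif_lt by blast
  have bm: "b < m" using abc(1) dif_lt by blast
  note st = star_Cl[OF V t abc]
  show False
  proof (cases "dif x u = dif x v")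
    case True
    obtain k l where kl: "dif x u = {k,l}" "k \<noteq> l" using uv(3) by (auto simp: adj_iff card_2_iff)
    have dv: "dif x v = {k,l}" using True kl(1) by simp
    have km: "k < m" "l < m" using kl(1) dif_lt by blast+
    note lc = line_Cl[OF V(1) uv(1,2) uv(3,4,5) kl(1) dv kl(2)]
    show False
    proof (cases "a = k \<or> a = l")
      case True
      obtain l' where l': "{k,l} = {a,l'}" "l' \<noteq> a" "l' < m"
      proof (cases "a = k")
        case True then show ?thesis using that[of l] kl(2) km by simp
      next
        case False then have "a = l" using \<open>a = k \<or> a = l\<close> by simp
        then show ?thesis using that[of k] kl(2) km by auto
      qed
      have s1: "lp x a l' (y a) \<in> Cl x y z" "dif x (lp x a l' (y a)) = {a,l'}" using st[OF l'(3,2)] by auto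
      have ne: "lp x a l' (y a) \<noteq> x" using lp_ne_x[OF s1(2)] .
      have "dif x (lp x a l' (y a)) \<subseteq> {k,l}" using s1(2) l'(1) by simp
      then have "lp x a l' (y a) \<in> Cl x u v" using lc[OF Cl_V[OF s1(1)] _ ne] by blast
      then show False using H s1(1) by blast
    next
      case False
      have s1: "lp x a k (y a) \<in> Cl x y z" "dif x (lp x a k (y a)) = {a,k}" using st[OF km(1)] False by auto
      let ?s = "lp x a k (y a)"
      have sV: "?s \<in> V" using Cl_V[OF s1(1)] .
      have kin: "k \<in> dif x ?s" using s1(2) by simp
      have ain: "a \<in> dif x ?s" using s1(2) by simp
      have sk: "?s k < n" "?s k \<noteq> x k" using sV km dif_in[OF kin] by (auto simp: inV)
      let ?q = "lp x k l (?s k)"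
      have q: "?q \<in> V" "dif x ?q = {k,l}" "adj x ?q" using lp_line[OF V(1) km kl(2) sk] by auto
      have "?q \<noteq> x" using adj_ne[OF q(3)] by (rule not_sym)
      then have qC: "?q \<in> Cl x u v" using lc[OF q(1)] q(2) by blast
      have qk: "?q k = ?s k" using lp_i kl(2) by metis
      have qo: "?q j = x j" if "j \<noteq> k" "j \<noteq> l" for j using lp_o that by metis
      have so: "?s j = x j" if "j \<noteq> a" "j \<noteq> k" for j using lp_o that by metis
      have "dif ?s ?q \<subseteq> {a,l}"
      proof (rule dif_subI)
        fix j assume j: "j < m" "j \<notin> {a,l}"
        show "?s j = ?q j"
        proof (cases "j = k")
          case True then show ?thesis using qk by simp
        next
          case False then show ?thesis using qo[OF False] so[OF _ False] j(2) by simp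
        qed
      qed
      moreover have "?s \<noteq> ?q"
      proof -
        have "?s a \<noteq> x a" using dif_in[OF ain] by simp
        moreover have "?q a = x a" using qo False by auto
        ultimately show ?thesis by metis
      qed
      moreover have "a \<noteq> l" using False by auto
      ultimately have "adj ?s ?q" using sub2_adj[OF sV q(1)] by blast
      then show False using H s1(1) qC by blast
    qed
  next
    case False
    obtain a' b' c' where abc': "dif x u = {a',b'}" "dif x v = {a',c'}" "a' \<noteq> b'" "a' \<noteq> c'" "b' \<noteq> c'" "u a' = v a'"
      using NC[OF uv(3,4,5) False] by blast
    have am': "a' < m" using abc'(1) dif_lt by blast
    note st' = star_Cl[OF V(1) uv(1,2) uv(3,4,5) abc']
    show False
    proof (cases "a' = a")
      case True
      have s1: "lp x a b (y a) \<in> Cl x y z" "dif x (lp x a b (y a)) = {a,b}" using st[OF bm abc(3)[symmetric]] by auto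
      have s2: "lp x a b (u a) \<in> Cl x u v" "dif x (lp x a b (u a)) = {a,b}" using st'[OF bm] abc(3) True by auto
      have "lp x a b (y a) = lp x a b (u a) \<or> adj (lp x a b (y a)) (lp x a b (u a))"
        using same_line[OF Cl_V[OF s1(1)] Cl_V[OF s2(1)], of x a b] s1(2) s2(2) abc(3) by simp
      then show False using H s1(1) s2(1) by blast
    next
      case False
      have s1: "lp x a a' (y a) \<in> Cl x y z" "dif x (lp x a a' (y a)) = {a,a'}" using st[OF am'] False by auto
      have s2: "lp x a' a (u a') \<in> Cl x u v" "dif x (lp x a' a (u a')) = {a',a}" using st'[OF am] False by auto
      have "dif x (lp x a' a (u a')) \<subseteq> {a,a'}" using s2(2) by auto
      then have "lp x a a' (y a) = lp x a' a (u a') \<or> adj (lp x a a' (y a)) (lp x a' a (u a'))"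
        using same_line[OF Cl_V[OF s1(1)] Cl_V[OF s2(1)], of x a a'] s1(2) False by simp
      then show False using H s1(1) s2(1) by blast
    qed
  qed
qed


lemma star_adj:
  assumes "p \<in> V" "q \<in> V" "dif x p = {a,b}" "dif x q = {a,c}" "b \<noteq> c" "a \<noteq> b" "a \<noteq> c" "p a = q a"
  shows "adj p q"
proof -
  have "dif p q \<subseteq> {b,c}"
  proof (rule dif_subI)
    fix j assume j: "j < m" "j \<notin> {b,c}"
    show "p j = q j"
    proof (cases "j = a")
      case True then show ?thesis using assms(8) by simp
    next
      case False then show ?thesis using dif_out[OF assms(3) j(1)] dif_out[OF assms(4) j(1)] j(2) by simp
    qed
  qed
  moreover have "p \<noteq> q"
  proof -
    have bm: "b < m" using assms(3) dif_lt by blast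
    have "p b \<noteq> x b" using dif_in[of b x p] assms(3) by simp
    moreover have "q b = x b" using dif_out[OF assms(4) bm] assms(5,6) by simp
    ultimately show ?thesis by metis
  qed
  ultimately show ?thesis using sub2_adj[OF assms(1,2)] assms(5) by blast
qed

lemma modeq_dvd: "(a::nat) mod n = b mod n \<Longrightarrow> int n dvd int a - int b"
proof -
  assume "a mod n = b mod n"
  then have "int (a mod n) = int (b mod n)" by simp
  then have "int a mod int n = int b mod int n" by (simp add: of_nat_mod)
  then show ?thesis by (simp add: mod_eq_dvd_iff)
qed

lemma line_dvd:
  assumes "x \<in> V" "p \<in> V" "i < m" "j < m" "i \<noteq> j" "dif x p \<subseteq> {i,j}"
  shows "int n dvd (int (p i) + int (p j)) - (int (x i) + int (x j))"
  using modeq_dvd[OF line_sum[OF assms]] by simp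

section \<open>Automorphisms\<close>

abbreviation aut where "aut \<phi> \<equiv> csr_automorphism m n \<phi>"

lemma aut_bij: "aut \<phi> \<Longrightarrow> bij_betw \<phi> V V"
  unfolding csr_automorphism_def by (rule conjunct1)

lemma aut_V: "aut \<phi> \<Longrightarrow> x \<in> V \<Longrightarrow> \<phi> x \<in> V"
  by (rule bij_betw_apply[OF aut_bij])

lemma aut_adj: "aut \<phi> \<Longrightarrow> x \<in> V \<Longrightarrow> y \<in> V \<Longrightarrow> adj (\<phi> x) (\<phi> y) \<longleftrightarrow> adj x y"
  unfolding csr_automorphism_def by (drule conjunct2) (drule bspec, assumption, drule bspec, assumption, assumption)

lemma aut_inj: "aut \<phi> \<Longrightarrow> x \<in> V \<Longrightarrow> y \<in> V \<Longrightarrow> \<phi> x = \<phi> y \<Longrightarrow> x = y"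
  using aut_bij[of \<phi>] unfolding bij_betw_def inj_on_def by blast

lemma aut_surj: "aut \<phi> \<Longrightarrow> y \<in> V \<Longrightarrow> \<exists>x\<in>V. \<phi> x = y"
  using aut_bij[of \<phi>] unfolding bij_betw_def by (metis imageE)

lemma aut_inv:
  assumes "aut \<phi>"
  shows "aut (inv_into V \<phi>)" "\<And>x. x \<in> V \<Longrightarrow> inv_into V \<phi> (\<phi> x) = x"
    "\<And>y. y \<in> V \<Longrightarrow> \<phi> (inv_into V \<phi> y) = y"
proof -
  have b: "bij_betw \<phi> V V" by (rule aut_bij[OF assms])
  show i1: "\<And>x. x \<in> V \<Longrightarrow> inv_into V \<phi> (\<phi> x) = x" by (rule bij_betw_inv_into_left[OF b])
  show i2: "\<And>y. y \<in> V \<Longrightarrow> \<phi> (inv_into V \<phi> y) = y" by (rule bij_betw_inv_into_right[OF b])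
  have bi: "bij_betw (inv_into V \<phi>) V V" using bij_betw_inv_into[OF b] .
  have "\<forall>x\<in>V. \<forall>y\<in>V. adj (inv_into V \<phi> x) (inv_into V \<phi> y) \<longleftrightarrow> adj x y"
  proof (intro ballI)
    fix x y assume xy: "x \<in> V" "y \<in> V"
    have iv: "inv_into V \<phi> x \<in> V" "inv_into V \<phi> y \<in> V" using bij_betw_apply[OF bi] xy by blast+
    have "adj (\<phi> (inv_into V \<phi> x)) (\<phi> (inv_into V \<phi> y)) \<longleftrightarrow> adj (inv_into V \<phi> x) (inv_into V \<phi> y)"
      by (rule aut_adj[OF assms iv])
    then show "adj (inv_into V \<phi> x) (inv_into V \<phi> y) \<longleftrightarrow> adj x y" using i2 xy by simp
  qed
  then show "aut (inv_into V \<phi>)" using bi by (simp add: csr_automorphism_def)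
qed

lemma Cl_pre:
  assumes "aut \<phi>" "x \<in> V" "y \<in> V" "z \<in> V" "a' \<in> Cl (\<phi> x) (\<phi> y) (\<phi> z)"
  shows "\<exists>a\<in>Cl x y z. a' = \<phi> a"
proof -
  have "a' \<in> V" using assms(5) Cl_V by blast
  then obtain a where a: "a \<in> V" "\<phi> a = a'" using aut_surj[OF assms(1)] by blast
  have "a' = \<phi> y \<or> a' = \<phi> z \<or> (adj a' (\<phi> x) \<and> adj a' (\<phi> y) \<and> adj a' (\<phi> z))"
    using assms(5) by (simp add: Cl_def)
  then have "a = y \<or> a = z \<or> (adj a x \<and> adj a y \<and> adj a z)"
  proof (elim disjE)
    assume "a' = \<phi> y" then show ?thesis using aut_inj[OF assms(1) a(1) assms(3)] a(2) by simp
  next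
    assume "a' = \<phi> z" then show ?thesis using aut_inj[OF assms(1) a(1) assms(4)] a(2) by simp
  next
    assume h: "adj a' (\<phi> x) \<and> adj a' (\<phi> y) \<and> adj a' (\<phi> z)"
    have "adj a x" using h a(2) aut_adj[OF assms(1) a(1) assms(2)] by simp
    moreover have "adj a y" using h a(2) aut_adj[OF assms(1) a(1) assms(3)] by simp
    moreover have "adj a z" using h a(2) aut_adj[OF assms(1) a(1) assms(4)] by simp
    ultimately show ?thesis by simp
  qed
  then have "a \<in> Cl x y z" using a(1) by (simp add: Cl_def)
  then show ?thesis using a(2) by blast
qed

lemma P_transfer:
  assumes "aut \<phi>" "x \<in> V" "y \<in> V" "z \<in> V" "P x y z"
  shows "P (\<phi> x) (\<phi> y) (\<phi> z)"
proof -
  obtain u v where uv: "u \<in> V" "v \<in> V" "adj x u" "adj x v" "adj u v"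
    and H: "\<forall>a\<in>Cl x y z. \<forall>b\<in>Cl x u v. a \<noteq> b \<and> \<not> adj a b" using assms(5) unfolding P_def by blast
  have "\<forall>a'\<in>Cl (\<phi> x) (\<phi> y) (\<phi> z). \<forall>b'\<in>Cl (\<phi> x) (\<phi> u) (\<phi> v). a' \<noteq> b' \<and> \<not> adj a' b'"
  proof (intro ballI)
    fix a' b' assume a': "a' \<in> Cl (\<phi> x) (\<phi> y) (\<phi> z)" and b': "b' \<in> Cl (\<phi> x) (\<phi> u) (\<phi> v)"
    obtain a where a: "a \<in> Cl x y z" "a' = \<phi> a" using Cl_pre[OF assms(1-4) a'] by blast
    obtain b where b: "b \<in> Cl x u v" "b' = \<phi> b" using Cl_pre[OF assms(1,2) uv(1,2) b'] by blast
    have ab: "a \<in> V" "b \<in> V" using a b Cl_V by blast+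
    have h: "a \<noteq> b" "\<not> adj a b" using H a(1) b(1) by blast+
    have "\<phi> a \<noteq> \<phi> b" using aut_inj[OF assms(1) ab] h(1) by blast
    moreover have "\<not> adj (\<phi> a) (\<phi> b)" using aut_adj[OF assms(1) ab] h(2) by simp
    ultimately show "a' \<noteq> b' \<and> \<not> adj a' b'" using a(2) b(2) by simp
  qed
  moreover have "\<phi> u \<in> V" "\<phi> v \<in> V" using aut_V[OF assms(1)] uv by blast+
  moreover have "adj (\<phi> x) (\<phi> u)" "adj (\<phi> x) (\<phi> v)" "adj (\<phi> u) (\<phi> v)"
    using aut_adj[OF assms(1)] uv assms(2) by blast+
  ultimately show ?thesis unfolding P_def by blast
qed

lemma coll_transfer:
  assumes "aut \<phi>" "x \<in> V" "y \<in> V" "z \<in> V" "adj x y" "adj x z" "dif x y = dif x z"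
  shows "dif (\<phi> x) (\<phi> y) = dif (\<phi> x) (\<phi> z)"
proof (cases "y = z")
  case True then show ?thesis by simp
next
  case False
  obtain i j where ij: "dif x y = {i,j}" "i \<noteq> j" using assms(5) by (auto simp: adj_iff card_2_iff)
  have s1: "dif x y \<subseteq> {i,j}" using ij(1) by simp
  have s2: "dif x z \<subseteq> {i,j}" using ij(1) assms(7) by simp
  have "y = z \<or> adj y z" by (rule same_line[OF assms(3,4) s1 s2 ij(2)])
  then have ayz: "adj y z" using False by simp
  have Pp: "P x y z" by (rule D1[OF assms(2-6) ayz assms(7)])
  have Pf: "P (\<phi> x) (\<phi> y) (\<phi> z)" by (rule P_transfer[OF assms(1-4) Pp])
  have V': "\<phi> x \<in> V" "\<phi> y \<in> V" "\<phi> z \<in> V" using aut_V[OF assms(1)] assms(2-4) by blast+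
  have a1: "adj (\<phi> x) (\<phi> y)" using aut_adj[OF assms(1) assms(2,3)] assms(5) by simp
  have a2: "adj (\<phi> x) (\<phi> z)" using aut_adj[OF assms(1) assms(2,4)] assms(6) by simp
  have a3: "adj (\<phi> y) (\<phi> z)" using aut_adj[OF assms(1) assms(3,4)] ayz by simp
  show ?thesis
  proof (rule ccontr)
    assume ne: "dif (\<phi> x) (\<phi> y) \<noteq> dif (\<phi> x) (\<phi> z)"
    have "\<not> P (\<phi> x) (\<phi> y) (\<phi> z)" by (rule D2[OF V' a1 a2 a3 ne])
    then show False using Pf by simp
  qed
qed

lemma coll_iff:
  assumes "aut \<phi>" "x \<in> V" "y \<in> V" "z \<in> V" "adj x y" "adj x z"
  shows "dif (\<phi> x) (\<phi> y) = dif (\<phi> x) (\<phi> z) \<longleftrightarrow> dif x y = dif x z"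
proof
  assume h: "dif (\<phi> x) (\<phi> y) = dif (\<phi> x) (\<phi> z)"
  let ?i = "inv_into V \<phi>"
  have V': "\<phi> x \<in> V" "\<phi> y \<in> V" "\<phi> z \<in> V" using aut_V[OF assms(1)] assms(2-4) by blast+
  have "adj (\<phi> x) (\<phi> y)" "adj (\<phi> x) (\<phi> z)" using aut_adj[OF assms(1)] assms by blast+
  then have "dif (?i (\<phi> x)) (?i (\<phi> y)) = dif (?i (\<phi> x)) (?i (\<phi> z))"
    using coll_transfer[OF aut_inv(1)[OF assms(1)] V'] h by blast
  then show "dif x y = dif x z" using aut_inv(2)[OF assms(1)] assms(2-4) by simp
next
  assume "dif x y = dif x z"
  then show "dif (\<phi> x) (\<phi> y) = dif (\<phi> x) (\<phi> z)" using coll_transfer assms by blast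
qed


definition T where "T x y z w = (\<forall>y'\<in>V. adj x y' \<and> dif x y' = dif x y \<longrightarrow>
   (\<exists>z'\<in>V. \<exists>w'\<in>V. adj x z' \<and> dif x z' = dif x z \<and> adj x w' \<and> dif x w' = dif x w \<and>
      adj y' z' \<and> adj y' w' \<and> adj z' w'))"

lemma T_transfer:
  assumes f: "aut \<phi>" and V: "x \<in> V" "y \<in> V" "z \<in> V" "w \<in> V" and a: "adj x y" "adj x z" "adj x w"
    and T: "T x y z w"
  shows "T (\<phi> x) (\<phi> y) (\<phi> z) (\<phi> w)"
  unfolding T_def
proof (intro ballI impI)
  fix y'' assume y'': "y'' \<in> V" "adj (\<phi> x) y'' \<and> dif (\<phi> x) y'' = dif (\<phi> x) (\<phi> y)"
  obtain y' where y': "y' \<in> V" "\<phi> y' = y''" using aut_surj[OF f y''(1)] by blast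
  have ay': "adj x y'" using aut_adj[OF f V(1) y'(1)] y' y'' by simp
  have "dif x y' = dif x y" using coll_iff[OF f V(1) y'(1) V(2) ay' a(1)] y' y'' by simp
  then obtain z' w' where zw: "z' \<in> V" "w' \<in> V" "adj x z'" "dif x z' = dif x z" "adj x w'" "dif x w' = dif x w"
      "adj y' z'" "adj y' w'" "adj z' w'" using T y'(1) ay' unfolding T_def by blast
  have "\<phi> z' \<in> V" "\<phi> w' \<in> V" using aut_V[OF f] zw by blast+
  moreover have "adj (\<phi> x) (\<phi> z')" "adj (\<phi> x) (\<phi> w')" using aut_adj[OF f] V zw by blast+
  moreover have "dif (\<phi> x) (\<phi> z') = dif (\<phi> x) (\<phi> z)" using coll_transfer[OF f V(1) zw(1) V(3) zw(3) a(2) zw(4)] .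
  moreover have "dif (\<phi> x) (\<phi> w') = dif (\<phi> x) (\<phi> w)" using coll_transfer[OF f V(1) zw(2) V(4) zw(5) a(3) zw(6)] .
  moreover have "adj y'' (\<phi> z')" "adj y'' (\<phi> w')" "adj (\<phi> z') (\<phi> w')"
    using aut_adj[OF f] y' zw by blast+
  ultimately show "\<exists>z'\<in>V. \<exists>w'\<in>V. adj (\<phi> x) z' \<and> dif (\<phi> x) z' = dif (\<phi> x) (\<phi> z) \<and>
      adj (\<phi> x) w' \<and> dif (\<phi> x) w' = dif (\<phi> x) (\<phi> w) \<and> adj y'' z' \<and> adj y'' w' \<and> adj z' w'"
    by blast
qed

lemma T_pos:
  assumes V: "x \<in> V" and d: "dif x y = {a,b}" "dif x z = {a,c}" "dif x w = {a,d}"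
    and dist: "a \<noteq> b" "a \<noteq> c" "a \<noteq> d" "b \<noteq> c" "b \<noteq> d" "c \<noteq> d"
  shows "T x y z w"
  unfolding T_def
proof (intro ballI impI)
  fix y' assume y': "y' \<in> V" "adj x y' \<and> dif x y' = dif x y"
  have dy: "dif x y' = {a,b}" using y' d by simp
  have ad: "a \<in> dif x y'" using dy by simp
  have am: "a < m" using dif_lt[OF ad] .
  have cm: "c < m" using d(2) dif_lt by blast
  have dm: "d < m" using d(3) dif_lt by blast
  have ya: "y' a < n" "y' a \<noteq> x a" using y'(1) am dif_in[OF ad] by (auto simp: inV)
  define z' where "z' = lp x a c (y' a)"
  define w' where "w' = lp x a d (y' a)"
  have z': "z' \<in> V" "dif x z' = {a,c}" "adj x z'" unfolding z'_def using lp_line[OF V am cm dist(2) ya] by auto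
  have w': "w' \<in> V" "dif x w' = {a,d}" "adj x w'" unfolding w'_def using lp_line[OF V am dm dist(3) ya] by auto
  have za: "z' a = y' a" "w' a = y' a" unfolding z'_def w'_def using lp_i dist by metis+
  have "adj y' z'" using star_adj[OF y'(1) z'(1) dy z'(2)] dist za by simp
  moreover have "adj y' w'" using star_adj[OF y'(1) w'(1) dy w'(2)] dist za by simp
  moreover have "adj z' w'" using star_adj[OF z'(1) w'(1) z'(2) w'(2)] dist za by simp
  moreover have "dif x z' = dif x z" "dif x w' = dif x w" using z'(2) w'(2) d by simp_all
  ultimately show "\<exists>z'\<in>V. \<exists>w'\<in>V. adj x z' \<and> dif x z' = dif x z \<and> adj x w' \<and> dif x w' = dif x w \<and>
      adj y' z' \<and> adj y' w' \<and> adj z' w'"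
    using z'(1,3) w'(1,3) by (intro bexI[where x=z'] bexI[where x=w'] conjI) simp_all
qed

lemma T_neg:
  assumes V: "x \<in> V" "y \<in> V" "z \<in> V" "w \<in> V" and a: "adj x y" "adj x z" "adj x w"
    and dist: "dif x y \<noteq> dif x z" "dif x y \<noteq> dif x w" "dif x z \<noteq> dif x w"
    and nc: "dif x y \<inter> dif x z \<inter> dif x w = {}"
  shows "\<not> T x y z w"
proof
  assume T: "T x y z w"
  obtain a b where ab: "dif x y = {a,b}" "a \<noteq> b" using a(1) by (auto simp: adj_iff card_2_iff)
  have am: "a < m" "b < m" using ab(1) dif_lt by blast+
  have xa: "x a < n" using V(1) am by (simp add: inV)
  define y' where "y' = lp x a b ((x a + 1) mod n)"
  have n1: "(x a + 1) mod n \<noteq> x a" using mod_shift_ne[of 1 "x a"] n3 xa by simp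
  have y': "y' \<in> V" "dif x y' = {a,b}" "adj x y'" unfolding y'_def using lp_line[OF V(1) am ab(2) _ n1] npos by auto
  have y'a: "y' a = (x a + 1) mod n" unfolding y'_def using lp_i ab(2) by metis
  obtain z' w' where zw: "z' \<in> V" "w' \<in> V" "adj x z'" "dif x z' = dif x z" "adj x w'" "dif x w' = dif x w"
      "adj y' z'" "adj y' w'" "adj z' w'" using T y' ab unfolding T_def by blast
  obtain p q r where 1: "dif x y' = {p,q}" "dif x z' = {p,r}" "p \<noteq> q" "p \<noteq> r" "q \<noteq> r" "y' p = z' p"
    using NC[OF y'(3) zw(3) zw(7)] y'(2) ab(1) zw(4) dist(1) by metis
  obtain p2 q2 r2 where 2: "dif x y' = {p2,q2}" "dif x w' = {p2,r2}" "p2 \<noteq> q2" "p2 \<noteq> r2" "q2 \<noteq> r2" "y' p2 = w' p2"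
    using NC[OF y'(3) zw(5) zw(8)] y'(2) ab(1) zw(6) dist(2) by metis
  obtain p3 q3 r3 where 3: "dif x z' = {p3,q3}" "dif x w' = {p3,r3}" "p3 \<noteq> q3" "p3 \<noteq> r3" "q3 \<noteq> r3" "z' p3 = w' p3"
    using NC[OF zw(3) zw(5) zw(9)] zw(4) zw(6) dist(3) by metis
  have Y: "dif x y' = dif x y" using y'(2) ab(1) by simp
  have pW: "p \<notin> dif x w" using nc 1 Y zw(4) by auto
  have p2W: "p2 \<in> dif x w" "p2 \<notin> dif x z" using nc 2 Y zw(6) by auto
  have p3W: "p3 \<in> dif x w" "p3 \<notin> dif x y" using nc 3 Y zw(4) zw(6) by auto
  have sy: "dif x y' \<subseteq> {p,p2}" using 1 2 pW p2W by auto
  have sz: "dif x z' \<subseteq> {p,p3}" using 1 3 pW p3W zw(4) zw(6) by auto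
  have sw: "dif x w' \<subseteq> {p2,p3}" using 2 3 p2W p3W zw(4) zw(6) by auto
  have p3Z: "p3 \<in> dif x z" using 3(1) zw(4) by auto
  have ne: "p \<noteq> p2" "p \<noteq> p3" "p2 \<noteq> p3" using pW p2W p3W p3Z by auto
  have "p \<in> dif x y'" using 1(1) by simp
  moreover have "p2 \<in> dif x y'" using 2(1) by simp
  moreover have "p3 \<in> dif x z'" using 3(1) by simp
  ultimately have mm: "p < m" "p2 < m" "p3 < m" using dif_lt by blast+
  let ?N = "int n"
  have h1: "?N dvd (int (y' p) + int (y' p2)) - (int (x p) + int (x p2))"
    using line_dvd[OF V(1) y'(1) mm(1,2) ne(1) sy] .
  have h2: "?N dvd (int (z' p) + int (z' p3)) - (int (x p) + int (x p3))"
    using line_dvd[OF V(1) zw(1) mm(1,3) ne(2) sz] .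
  have h3: "?N dvd (int (w' p2) + int (w' p3)) - (int (x p2) + int (x p3))"
    using line_dvd[OF V(1) zw(2) mm(2,3) ne(3) sw] .
  have "?N dvd ((int (y' p) + int (y' p2)) - (int (x p) + int (x p2)))
      + ((int (z' p) + int (z' p3)) - (int (x p) + int (x p3)))
      - ((int (w' p2) + int (w' p3)) - (int (x p2) + int (x p3)))"
    by (rule dvd_diff[OF dvd_add[OF h1 h2] h3])
  then have h: "?N dvd 2 * (int (y' p) - int (x p))" using 1(6) 2(6) 3(6) by (simp add: algebra_simps)
  have g: "?N dvd int (y' a) - int (x a) - 1"
  proof -
    have "(y' a) mod n = (x a + 1) mod n" using y'a by simp
    then have d: "int n dvd int (y' a) - int (x a + 1)" by (rule modeq_dvd)
    have e: "int (y' a) - int (x a + 1) = int (y' a) - int (x a) - 1" by simp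
    show ?thesis using d unfolding e .
  qed
  have hab: "?N dvd (int (y' a) + int (y' b)) - (int (x a) + int (x b))"
    using line_dvd[OF V(1) y'(1) am ab(2)] y'(2) by simp
  have "p = a \<or> p = b" using 1(1) y'(2) by auto
  then have "?N dvd 2"
  proof
    assume pa: "p = a"
    have h': "?N dvd 2 * (int (y' a) - int (x a))" using h pa by simp
    have "?N dvd 2 * (int (y' a) - int (x a)) - 2 * (int (y' a) - int (x a) - 1)"
      by (rule dvd_diff[OF h' dvd_mult[OF g]])
    then show ?thesis by (simp add: algebra_simps)
  next
    assume pb: "p = b"
    have h': "?N dvd 2 * (int (y' b) - int (x b))" using h pb by simp
    have "?N dvd 2 * (int (y' b) - int (x b)) - 2 * ((int (y' a) + int (y' b)) - (int (x a) + int (x b))) + 2 * (int (y' a) - int (x a) - 1)"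
      by (rule dvd_add[OF dvd_diff[OF h' dvd_mult[OF hab]] dvd_mult[OF g]])
    then have "?N dvd - 2" by (simp add: algebra_simps)
    then show ?thesis by simp
  qed
  then have "?N \<le> 2" using zdvd_imp_le[of "int n" 2] by simp
  then show False using n3 by simp
qed


lemma two_sets:
  assumes "card A = 2" "card B = 2" "A \<noteq> B" "c \<in> A" "c \<in> B" "c' \<in> A" "c' \<in> B"
  shows "c = c'"
proof (rule ccontr)
  assume ne: "c \<noteq> c'"
  have fA: "finite A" "finite B" using assms(1,2) card.infinite by fastforce+
  have "A = {c,c'}" using card_subset_eq[OF fA(1), of "{c,c'}"] assms(1,4,6) ne by simp
  moreover have "B = {c,c'}" using card_subset_eq[OF fA(2), of "{c,c'}"] assms(2,5,7) ne by simp
  ultimately show False using assms(3) by simp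
qed

lemma card2_pick: "card S = 2 \<Longrightarrow> c \<in> S \<Longrightarrow> \<exists>b. S = {c,b} \<and> b \<noteq> c"
  by (auto simp: card_2_iff doubleton_eq_iff)

lemma T_common:
  assumes V: "x \<in> V" "y \<in> V" "z \<in> V" "w \<in> V" and a: "adj x y" "adj x z" "adj x w"
    and dist: "dif x y \<noteq> dif x z" "dif x y \<noteq> dif x w" "dif x z \<noteq> dif x w"
    and T: "T x y z w"
  shows "\<exists>c. c \<in> dif x y \<and> c \<in> dif x z \<and> c \<in> dif x w"
  using T_neg[OF V a dist] T by blast

lemma img_T:
  assumes f: "aut \<phi>" and V: "x \<in> V" "y \<in> V" "z \<in> V" "w \<in> V" and a: "adj x y" "adj x z" "adj x w"
    and dist: "dif x y \<noteq> dif x z" "dif x y \<noteq> dif x w" "dif x z \<noteq> dif x w"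
    and T: "T x y z w"
  shows "\<exists>c. c \<in> dif (\<phi> x) (\<phi> y) \<and> c \<in> dif (\<phi> x) (\<phi> z) \<and> c \<in> dif (\<phi> x) (\<phi> w)"
proof -
  have V': "\<phi> x \<in> V" "\<phi> y \<in> V" "\<phi> z \<in> V" "\<phi> w \<in> V" using aut_V[OF f] V by blast+
  have a': "adj (\<phi> x) (\<phi> y)" "adj (\<phi> x) (\<phi> z)" "adj (\<phi> x) (\<phi> w)" using aut_adj[OF f] V a by blast+
  have d': "dif (\<phi> x) (\<phi> y) \<noteq> dif (\<phi> x) (\<phi> z)" "dif (\<phi> x) (\<phi> y) \<noteq> dif (\<phi> x) (\<phi> w)"
      "dif (\<phi> x) (\<phi> z) \<noteq> dif (\<phi> x) (\<phi> w)"
    using coll_iff[OF f] V a dist by blast+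
  show ?thesis using T_common[OF V' a' d' T_transfer[OF f V a T]] .
qed

definition sigp where "sigp \<psi> x i c \<longleftrightarrow> c < m \<and> (\<forall>y\<in>V. adj x y \<and> i \<in> dif x y \<longrightarrow> c \<in> dif (\<psi> x) (\<psi> y))"
definition sig where "sig \<psi> x i = (THE c. sigp \<psi> x i c)"

lemma lp_nb:
  assumes "x \<in> V" "i < m" "j < m" "i \<noteq> j"
  shows "lp x i j ((x i + 1) mod n) \<in> V" "dif x (lp x i j ((x i + 1) mod n)) = {i,j}" "adj x (lp x i j ((x i + 1) mod n))"
proof -
  have xa: "x i < n" using assms(1,2) by (simp add: inV)
  have n1: "(x i + 1) mod n \<noteq> x i" using mod_shift_ne[of 1 "x i"] n3 xa by simp
  show "lp x i j ((x i + 1) mod n) \<in> V" "dif x (lp x i j ((x i + 1) mod n)) = {i,j}" "adj x (lp x i j ((x i + 1) mod n))"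
    using lp_line[OF assms _ n1] npos by auto
qed

lemma sig_ex1:
  assumes f: "aut \<psi>" and V: "x \<in> V" and i: "i < m"
  shows "\<exists>!c. sigp \<psi> x i c"
proof -
  have "card {i} + 2 \<le> m" using m3 by simp
  then obtain j k where jk: "j < m" "k < m" "j \<noteq> k" "j \<noteq> i" "k \<noteq> i" using avail2[of "{i}"] by auto
  have "card {i,j,k} = 3" using jk by simp
  then have "card {i,j,k} + 1 \<le> m" using m3 by simp
  then obtain l where l: "l < m" "l \<notin> {i,j,k}" using avail1[of "{i,j,k}"] by auto
  let ?v = "(x i + 1) mod n"
  define y0 where "y0 = lp x i j ?v"
  define z0 where "z0 = lp x i k ?v"
  define w0 where "w0 = lp x i l ?v"
  have y0: "y0 \<in> V" "dif x y0 = {i,j}" "adj x y0" unfolding y0_def using lp_nb[OF V i jk(1)] jk by auto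
  have z0: "z0 \<in> V" "dif x z0 = {i,k}" "adj x z0" unfolding z0_def using lp_nb[OF V i jk(2)] jk by auto
  have w0: "w0 \<in> V" "dif x w0 = {i,l}" "adj x w0" unfolding w0_def using lp_nb[OF V i l(1)] l by auto
  have d0: "dif x y0 \<noteq> dif x z0" "dif x y0 \<noteq> dif x w0" "dif x z0 \<noteq> dif x w0"
    using y0 z0 w0 jk l by (auto simp: doubleton_eq_iff)
  have T0: "T x y0 z0 w0" using T_pos[OF V y0(2) z0(2) w0(2)] jk l by auto
  obtain c where c: "c \<in> dif (\<psi> x) (\<psi> y0)" "c \<in> dif (\<psi> x) (\<psi> z0)" "c \<in> dif (\<psi> x) (\<psi> w0)"
    using img_T[OF f V y0(1) z0(1) w0(1) y0(3) z0(3) w0(3) d0 T0] by blast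
  have V': "\<psi> x \<in> V" "\<psi> y0 \<in> V" "\<psi> z0 \<in> V" using aut_V[OF f] V y0 z0 by blast+
  have a': "adj (\<psi> x) (\<psi> y0)" "adj (\<psi> x) (\<psi> z0)" using aut_adj[OF f] V y0 z0 by blast+
  have d': "dif (\<psi> x) (\<psi> y0) \<noteq> dif (\<psi> x) (\<psi> z0)" using coll_iff[OF f V y0(1) z0(1) y0(3) z0(3)] d0(1) by blast
  have c2: "card (dif (\<psi> x) (\<psi> y0)) = 2" "card (dif (\<psi> x) (\<psi> z0)) = 2" using a' by (auto simp: adj_iff)
  have uniq: "c' = c" if "c' \<in> dif (\<psi> x) (\<psi> y0)" "c' \<in> dif (\<psi> x) (\<psi> z0)" for c'
    using two_sets[OF c2 d' c(1,2) that] by simp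
  have sc: "sigp \<psi> x i c"
    unfolding sigp_def
  proof (intro conjI ballI impI)
    show "c < m" using c(1) dif_lt by blast
    fix y assume y: "y \<in> V" "adj x y \<and> i \<in> dif x y"
    show "c \<in> dif (\<psi> x) (\<psi> y)"
    proof (cases "dif x y = dif x y0")
      case True
      then show ?thesis using coll_iff[OF f V y(1) y0(1) _ y0(3)] y c(1) by simp
    next
      case ny: False
      show ?thesis
      proof (cases "dif x y = dif x z0")
        case True
        then show ?thesis using coll_iff[OF f V y(1) z0(1) _ z0(3)] y c(2) by simp
      next
        case nz: False
        have cy: "card (dif x y) = 2" using y by (simp add: adj_iff)
        obtain b where b: "dif x y = {i,b}" "b \<noteq> i" using card2_pick[OF cy] y by blast
        have "b \<noteq> j" using b(1) ny y0(2) by blast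
        moreover have "b \<noteq> k" using b(1) nz z0(2) by blast
        ultimately have Ty: "T x y y0 z0" using T_pos[OF V b(1) y0(2) z0(2)] jk b(2) by simp
        have axy: "adj x y" using y by simp
        obtain c' where "c' \<in> dif (\<psi> x) (\<psi> y)" "c' \<in> dif (\<psi> x) (\<psi> y0)" "c' \<in> dif (\<psi> x) (\<psi> z0)"
          using img_T[OF f V y(1) y0(1) z0(1) axy y0(3) z0(3) ny nz d0(1) Ty] by blast
        then show ?thesis using uniq[of c'] by simp
      qed
    qed
  qed
  have u2: "c' = c" if "sigp \<psi> x i c'" for c'
  proof -
    have A: "\<forall>y\<in>V. adj x y \<and> i \<in> dif x y \<longrightarrow> c' \<in> dif (\<psi> x) (\<psi> y)" using that by (simp add: sigp_def)
    have "i \<in> dif x y0" "i \<in> dif x z0" using y0(2) z0(2) by simp_all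
    then have "c' \<in> dif (\<psi> x) (\<psi> y0)" "c' \<in> dif (\<psi> x) (\<psi> z0)"
      using A y0(1,3) z0(1,3) by simp_all
    then show ?thesis by (rule uniq)
  qed
  show ?thesis by (rule ex1I[of "sigp \<psi> x i" c, OF sc u2])
qed

lemma sig_prop:
  assumes f: "aut \<psi>" and V: "x \<in> V" and i: "i < m"
  shows "sig \<psi> x i < m" "\<And>y. y \<in> V \<Longrightarrow> adj x y \<Longrightarrow> i \<in> dif x y \<Longrightarrow> sig \<psi> x i \<in> dif (\<psi> x) (\<psi> y)"
proof -
  have "sigp \<psi> x i (sig \<psi> x i)" unfolding sig_def using theI'[OF sig_ex1[OF assms]] .
  then show "sig \<psi> x i < m" "\<And>y. y \<in> V \<Longrightarrow> adj x y \<Longrightarrow> i \<in> dif x y \<Longrightarrow> sig \<psi> x i \<in> dif (\<psi> x) (\<psi> y)"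
    unfolding sigp_def by auto
qed


lemma sig_inj:
  assumes f: "aut \<psi>" and V: "x \<in> V" and ij: "i < m" "j < m" "i \<noteq> j"
  shows "sig \<psi> x i \<noteq> sig \<psi> x j"
proof
  assume eq: "sig \<psi> x i = sig \<psi> x j"
  let ?c = "sig \<psi> x i"
  have "card {i,j} + 1 \<le> m" using m3 ij by simp
  then obtain k where k: "k < m" "k \<notin> {i,j}" using avail1[of "{i,j}"] by auto
  define y1 where "y1 = lp x i j ((x i + 1) mod n)"
  define y2 where "y2 = lp x i k ((x i + 1) mod n)"
  define y3 where "y3 = lp x j k ((x j + 1) mod n)"
  have y1: "y1 \<in> V" "dif x y1 = {i,j}" "adj x y1" unfolding y1_def using lp_nb[OF V ij(1,2,3)] by auto
  have y2: "y2 \<in> V" "dif x y2 = {i,k}" "adj x y2" unfolding y2_def using lp_nb[OF V ij(1) k(1)] k by auto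
  have y3: "y3 \<in> V" "dif x y3 = {j,k}" "adj x y3" unfolding y3_def using lp_nb[OF V ij(2) k(1)] k by auto
  have d0: "dif x y1 \<noteq> dif x y2" "dif x y1 \<noteq> dif x y3" "dif x y2 \<noteq> dif x y3"
    using y1 y2 y3 k ij by (auto simp: doubleton_eq_iff)
  have nc: "dif x y1 \<inter> dif x y2 \<inter> dif x y3 = {}" using y1 y2 y3 k ij by auto
  have V': "\<psi> x \<in> V" "\<psi> y1 \<in> V" "\<psi> y2 \<in> V" "\<psi> y3 \<in> V" using aut_V[OF f] V y1 y2 y3 by blast+
  have a': "adj (\<psi> x) (\<psi> y1)" "adj (\<psi> x) (\<psi> y2)" "adj (\<psi> x) (\<psi> y3)" using aut_adj[OF f] V y1 y2 y3 by blast+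
  have d': "dif (\<psi> x) (\<psi> y1) \<noteq> dif (\<psi> x) (\<psi> y2)" "dif (\<psi> x) (\<psi> y1) \<noteq> dif (\<psi> x) (\<psi> y3)"
      "dif (\<psi> x) (\<psi> y2) \<noteq> dif (\<psi> x) (\<psi> y3)"
    using coll_iff[OF f V] y1 y2 y3 d0 by blast+
  have c1: "?c \<in> dif (\<psi> x) (\<psi> y1)" using sig_prop(2)[OF f V ij(1) y1(1) y1(3)] y1(2) by simp
  have c2: "?c \<in> dif (\<psi> x) (\<psi> y2)" using sig_prop(2)[OF f V ij(1) y2(1) y2(3)] y2(2) by simp
  have c3: "?c \<in> dif (\<psi> x) (\<psi> y3)" using sig_prop(2)[OF f V ij(2) y3(1) y3(3)] y3(2) eq by simp
  obtain b1 where b1: "dif (\<psi> x) (\<psi> y1) = {?c,b1}" "b1 \<noteq> ?c" using card2_pick[OF _ c1] a'(1) by (auto simp: adj_iff)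
  obtain b2 where b2: "dif (\<psi> x) (\<psi> y2) = {?c,b2}" "b2 \<noteq> ?c" using card2_pick[OF _ c2] a'(2) by (auto simp: adj_iff)
  obtain b3 where b3: "dif (\<psi> x) (\<psi> y3) = {?c,b3}" "b3 \<noteq> ?c" using card2_pick[OF _ c3] a'(3) by (auto simp: adj_iff)
  have "b1 \<noteq> b2" "b1 \<noteq> b3" "b2 \<noteq> b3" using d' b1 b2 b3 by auto
  then have T': "T (\<psi> x) (\<psi> y1) (\<psi> y2) (\<psi> y3)" using T_pos[OF V'(1) b1(1) b2(1) b3(1)] b1 b2 b3 by auto
  let ?g = "inv_into V \<psi>"
  have "T (?g (\<psi> x)) (?g (\<psi> y1)) (?g (\<psi> y2)) (?g (\<psi> y3))"
    using T_transfer[OF aut_inv(1)[OF f] V' a' T'] .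
  then have "T x y1 y2 y3" using aut_inv(2)[OF f] V y1 y2 y3 by simp
  then show False using T_neg[OF V y1(1) y2(1) y3(1) y1(3) y2(3) y3(3) d0 nc] by blast
qed

lemma dif_img:
  assumes f: "aut \<psi>" and V: "x \<in> V" "y \<in> V" and a: "adj x y"
  shows "dif (\<psi> x) (\<psi> y) = sig \<psi> x ` dif x y"
proof -
  obtain i j where ij: "dif x y = {i,j}" "i \<noteq> j" using a by (auto simp: adj_iff card_2_iff)
  have m: "i < m" "j < m" using ij(1) dif_lt by blast+
  have "sig \<psi> x i \<in> dif (\<psi> x) (\<psi> y)" "sig \<psi> x j \<in> dif (\<psi> x) (\<psi> y)"
    using sig_prop(2)[OF f V(1) m(1) V(2) a] sig_prop(2)[OF f V(1) m(2) V(2) a] ij by auto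
  moreover have "sig \<psi> x i \<noteq> sig \<psi> x j" using sig_inj[OF f V(1) m ij(2)] .
  moreover have "card (dif (\<psi> x) (\<psi> y)) = 2"
  proof -
    have "adj (\<psi> x) (\<psi> y)" using aut_adj[OF f V] a by simp
    then show ?thesis by (simp add: adj_iff)
  qed
  ultimately have "dif (\<psi> x) (\<psi> y) = {sig \<psi> x i, sig \<psi> x j}"
    using card_subset_eq[of "dif (\<psi> x) (\<psi> y)" "{sig \<psi> x i, sig \<psi> x j}"] by simp
  then show ?thesis using ij by simp
qed

lemma NC_sd:
  assumes "adj x y" "adj x z" "adj y z" "dif x y \<noteq> dif x z"
  shows "dif y z = (dif x y - dif x z) \<union> (dif x z - dif x y)"
proof -
  obtain a b c where "dif x y = {a,b}" "dif x z = {a,c}" "a \<noteq> b" "a \<noteq> c" "b \<noteq> c" "dif y z = {b,c}"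
    using NC[OF assms] by blast
  then show ?thesis by auto
qed

lemma cons_c:
  assumes f: "aut \<psi>" and V: "x \<in> V" "y \<in> V" and a: "adj x y" and ab: "dif x y = {a,b}" "a \<noteq> b"
    and c: "c < m" "c \<noteq> a" "c \<noteq> b"
  shows "sig \<psi> y c = sig \<psi> x c \<and> sig \<psi> y a = sig \<psi> x a \<and> sig \<psi> y b = sig \<psi> x b"
proof -
  have am: "a < m" "b < m" using ab(1) dif_lt by blast+
  have ain: "a \<in> dif x y" "b \<in> dif x y" using ab by auto
  have ya: "y a < n" "y a \<noteq> x a" "y b < n" "y b \<noteq> x b" using V(2) am dif_in[OF ain(1)] dif_in[OF ain(2)] by (auto simp: inV)
  define z where "z = lp x a c (y a)"
  define z' where "z' = lp x b c (y b)"
  have z: "z \<in> V" "dif x z = {a,c}" "adj x z" unfolding z_def using lp_line[OF V(1) am(1) c(1) c(2)[symmetric] ya(1,2)] by auto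
  have z': "z' \<in> V" "dif x z' = {b,c}" "adj x z'" unfolding z'_def using lp_line[OF V(1) am(2) c(1) c(3)[symmetric] ya(3,4)] by auto
  have za: "z a = y a" unfolding z_def using lp_i c(2) by metis
  have zb: "z' b = y b" unfolding z'_def using lp_i c(3) by metis
  have ab': "dif x y = {b,a}" using ab by auto
  have ayz: "adj y z" using star_adj[OF V(2) z(1) ab(1) z(2)] c ab(2) za by auto
  have ayz': "adj y z'" using star_adj[OF V(2) z'(1) ab' z'(2)] c ab(2) zb by auto
  let ?X = "sig \<psi> x" and ?Y = "sig \<psi> y"
  have ix: "?X a \<noteq> ?X b" "?X a \<noteq> ?X c" "?X b \<noteq> ?X c" using sig_inj[OF f V(1)] am c ab(2) by auto
  have Vi: "\<psi> x \<in> V" "\<psi> y \<in> V" "\<psi> z \<in> V" "\<psi> z' \<in> V" using aut_V[OF f] V z z' by blast+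
  have ai: "adj (\<psi> x) (\<psi> y)" "adj (\<psi> x) (\<psi> z)" "adj (\<psi> y) (\<psi> z)" "adj (\<psi> x) (\<psi> z')" "adj (\<psi> y) (\<psi> z')"
    using aut_adj[OF f] V z z' a ayz ayz' by blast+
  have dxy: "dif (\<psi> x) (\<psi> y) = {?X a, ?X b}" using dif_img[OF f V a] ab by simp
  have dxz: "dif (\<psi> x) (\<psi> z) = {?X a, ?X c}" using dif_img[OF f V(1) z(1) z(3)] z(2) by simp
  have dxz': "dif (\<psi> x) (\<psi> z') = {?X b, ?X c}" using dif_img[OF f V(1) z'(1) z'(3)] z'(2) by simp
  have dyx0: "dif y x = {a,b}" by (subst dif_sym) (rule ab(1))
  have dyx: "dif (\<psi> y) (\<psi> x) = {?Y a, ?Y b}" using dif_img[OF f V(2) V(1) adj_sym[OF a]] dyx0 by simp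
  have dyz: "dif (\<psi> y) (\<psi> z) = {?Y b, ?Y c}"
  proof -
    have "dif y z = {b,c}" using NC_core[OF ayz ab(1) z(2) ab(2) c(2)[symmetric]] c(3) by auto
    then show ?thesis using dif_img[OF f V(2) z(1) ayz] by simp
  qed
  have dyz': "dif (\<psi> y) (\<psi> z') = {?Y a, ?Y c}"
  proof -
    have "dif y z' = {a,c}" using NC_core[OF ayz' ab' z'(2) ab(2)[symmetric] c(3)[symmetric]] c(2) by auto
    then show ?thesis using dif_img[OF f V(2) z'(1) ayz'] by simp
  qed
  have e1: "{?Y b, ?Y c} = {?X b, ?X c}"
  proof -
    have "dif (\<psi> x) (\<psi> y) \<noteq> dif (\<psi> x) (\<psi> z)" using dxy dxz ix by (auto simp: doubleton_eq_iff)
    then have "dif (\<psi> y) (\<psi> z) = (dif (\<psi> x) (\<psi> y) - dif (\<psi> x) (\<psi> z)) \<union> (dif (\<psi> x) (\<psi> z) - dif (\<psi> x) (\<psi> y))"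
      using NC_sd[OF ai(1,2,3)] by blast
    then show ?thesis using dxy dxz dyz ix by auto
  qed
  have e2: "{?Y a, ?Y c} = {?X a, ?X c}"
  proof -
    have "dif (\<psi> x) (\<psi> y) \<noteq> dif (\<psi> x) (\<psi> z')" using dxy dxz' ix by (auto simp: doubleton_eq_iff)
    then have "dif (\<psi> y) (\<psi> z') = (dif (\<psi> x) (\<psi> y) - dif (\<psi> x) (\<psi> z')) \<union> (dif (\<psi> x) (\<psi> z') - dif (\<psi> x) (\<psi> y))"
      using NC_sd[OF ai(1,4,5)] by blast
    then show ?thesis using dxy dxz' dyz' ix by auto
  qed
  have e3: "{?Y a, ?Y b} = {?X a, ?X b}" using dxy dyx dif_sym by metis
  have "?Y c \<in> {?X b, ?X c}" "?Y c \<in> {?X a, ?X c}" using e1 e2 by blast+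
  then have r1: "?Y c = ?X c" using ix by auto
  have "?Y a \<in> {?X a, ?X b}" "?Y a \<in> {?X a, ?X c}" using e2 e3 by blast+
  then have r2: "?Y a = ?X a" using ix by auto
  have "?Y b \<in> {?X a, ?X b}" "?Y b \<in> {?X b, ?X c}" using e1 e3 by blast+
  then have r3: "?Y b = ?X b" using ix by auto
  show ?thesis using r1 r2 r3 by simp
qed

lemma cons:
  assumes f: "aut \<psi>" and V: "x \<in> V" "y \<in> V" and a: "adj x y" and i: "i < m"
  shows "sig \<psi> y i = sig \<psi> x i"
proof -
  obtain a b where ab: "dif x y = {a,b}" "a \<noteq> b" using a by (auto simp: adj_iff card_2_iff)
  show ?thesis
  proof (cases "i = a \<or> i = b")
    case True
    have "card {a,b} + 1 \<le> m" using m3 ab(2) by simp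
    then obtain c where c: "c < m" "c \<notin> {a,b}" using avail1[of "{a,b}"] by auto
    then show ?thesis using cons_c[OF f V a ab, of c] True by auto
  next
    case False
    then show ?thesis using cons_c[OF f V a ab i] by auto
  qed
qed

lemma conn:
  assumes "x \<in> V" "y \<in> V" "Q x"
    "\<And>u v. u \<in> V \<Longrightarrow> v \<in> V \<Longrightarrow> adj u v \<Longrightarrow> dif u v \<subseteq> dif x y \<Longrightarrow> Q u \<Longrightarrow> Q v"
  shows "Q y"
  using assms
proof (induction "card (dif x y)" arbitrary: x rule: less_induct)
  case less
  show ?case
  proof (cases "x = y")
    case True then show ?thesis using less.prems(3) by simp
  next
    case False
    have ne: "dif x y \<noteq> {}" using V_eq less.prems(1,2) False by blast
    have "card (dif x y) \<noteq> 1" using card_dif_not1 less.prems(1,2) by blast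
    moreover have "card (dif x y) \<noteq> 0" using ne by simp
    ultimately have "2 \<le> card (dif x y)" by linarith
    then obtain S where S: "S \<subseteq> dif x y" "card S = 2" by (meson obtain_subset_with_card_n)
    then obtain j k where jk: "S = {j,k}" "j \<noteq> k" by (auto simp: card_2_iff)
    have jin: "j \<in> dif x y" "k \<in> dif x y" using S jk by auto
    have jm: "j < m" "k < m" using jin dif_lt by blast+
    have yj: "y j < n" "y j \<noteq> x j" using less.prems(2) jm dif_in[OF jin(1)] by (auto simp: inV)
    define x' where "x' = lp x j k (y j)"
    have x': "x' \<in> V" "dif x x' = {j,k}" "adj x x'" unfolding x'_def using lp_line[OF less.prems(1) jm jk(2) yj] by auto
    have Qx': "Q x'" using less.prems(4)[OF less.prems(1) x'(1) x'(3)] x'(2) jin less.prems(3) by auto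
    have x'j: "x' j = y j" unfolding x'_def using lp_i jk(2) by metis
    have sub: "dif x' y \<subseteq> dif x y"
    proof
      fix t assume t: "t \<in> dif x' y"
      show "t \<in> dif x y"
      proof (cases "t = j \<or> t = k")
        case True then show ?thesis using jin by auto
      next
        case False
        then have "x' t = x t" unfolding x'_def using lp_o by metis
        then show ?thesis using t by (auto simp: dif_def)
      qed
    qed
    have "j \<notin> dif x' y" using x'j by (auto simp: dif_def)
    then have "dif x' y \<subset> dif x y" using sub jin(1) by blast
    then have lt: "card (dif x' y) < card (dif x y)" by (simp add: psubset_card_mono)
    show ?thesis
      using less.hyps[OF lt x'(1) less.prems(2) Qx'] less.prems(4) sub by blast
  qed
qed


end

theorem lemma6:
  fixes m n :: nat and \<psi> :: "(nat \<Rightarrow> nat) \<Rightarrow> (nat \<Rightarrow> nat)"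
  assumes "m > 3" and "n > 3" and "csr_automorphism m n \<psi>"
  shows "\<exists>(\<psi>s :: nat \<Rightarrow> nat \<Rightarrow> nat) (\<sigma> :: nat \<Rightarrow> nat).
           (\<forall>i<m. bij_betw (\<psi>s i) {..<n} {..<n}) \<and>
           bij_betw \<sigma> {..<m} {..<m} \<and>
           (\<forall>x\<in>csr_vertices m n. \<forall>i<m. \<psi> x (\<sigma> i) = \<psi>s i (x i))"
proof -
  interpret csr m n using assms(1,2) by unfold_locales
  note f = assms(3)
  define x0 :: "nat \<Rightarrow> nat" where "x0 = (\<lambda>_. 0)"
  have x0: "x0 \<in> csr_vertices m n" unfolding x0_def using assms(2) by (simp add: inV)
  define \<sigma> where "\<sigma> = sig \<psi> x0"
  have glob: "\<forall>i<m. sig \<psi> x i = \<sigma> i" if x: "x \<in> csr_vertices m n" for x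
  proof (rule conn[OF x0 x, of "\<lambda>u. \<forall>i<m. sig \<psi> u i = \<sigma> i"])
    show "\<forall>i<m. sig \<psi> x0 i = \<sigma> i" by (simp add: \<sigma>_def)
  next
    fix u v assume uv: "u \<in> csr_vertices m n" "v \<in> csr_vertices m n" "adj u v" "\<forall>i<m. sig \<psi> u i = \<sigma> i"
    then show "\<forall>i<m. sig \<psi> v i = \<sigma> i" using cons[OF f uv(1,2,3)] by simp
  qed
  have \<sigma>m: "\<sigma> i < m" if "i < m" for i using sig_prop(1)[OF f x0 that] by (simp add: \<sigma>_def)
  have \<sigma>inj: "inj_on \<sigma> {..<m}" using sig_inj[OF f x0] unfolding inj_on_def \<sigma>_def by blast
  have \<sigma>bij: "bij_betw \<sigma> {..<m} {..<m}"
  proof -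
    have "\<sigma> ` {..<m} \<subseteq> {..<m}" using \<sigma>m by auto
    then have "\<sigma> ` {..<m} = {..<m}" using endo_inj_surj[OF _ _ \<sigma>inj] by simp
    then show ?thesis using \<sigma>inj by (simp add: bij_betw_def)
  qed
  have edge: "dif (\<psi> u) (\<psi> v) = \<sigma> ` dif u v" if "u \<in> csr_vertices m n" "v \<in> csr_vertices m n" "adj u v" for u v
  proof -
    have "dif (\<psi> u) (\<psi> v) = sig \<psi> u ` dif u v" using dif_img[OF f that] .
    also have "\<dots> = \<sigma> ` dif u v" using glob[OF that(1)] dif_lt by (intro image_cong) auto
    finally show ?thesis .
  qed
  have key: "\<psi> x (\<sigma> i) = \<psi> y (\<sigma> i)"
    if xy: "x \<in> csr_vertices m n" "y \<in> csr_vertices m n" "i < m" "x i = y i" for x y i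
  proof (rule conn[OF xy(1,2), of "\<lambda>u. \<psi> x (\<sigma> i) = \<psi> u (\<sigma> i)"])
    show "\<psi> x (\<sigma> i) = \<psi> x (\<sigma> i)" ..
  next
    fix u v assume uv: "u \<in> csr_vertices m n" "v \<in> csr_vertices m n" "adj u v" "dif u v \<subseteq> dif x y"
      "\<psi> x (\<sigma> i) = \<psi> u (\<sigma> i)"
    have "i \<notin> dif x y" using xy(4) by (simp add: dif_def)
    then have iu: "i \<notin> dif u v" using uv(4) by blast
    have "\<sigma> i \<notin> \<sigma> ` dif u v"
    proof
      assume "\<sigma> i \<in> \<sigma> ` dif u v"
      then obtain k where k: "k \<in> dif u v" "\<sigma> i = \<sigma> k" by blast
      have "k < m" using k(1) dif_lt by blast
      then have "i = k" using \<sigma>inj k(2) xy(3) unfolding inj_on_def by blast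
      then show False using iu k(1) by simp
    qed
    then have "\<sigma> i \<notin> dif (\<psi> u) (\<psi> v)" using edge[OF uv(1,2,3)] by simp
    then have "\<psi> u (\<sigma> i) = \<psi> v (\<sigma> i)" using \<sigma>m[OF xy(3)] by (simp add: dif_def)
    then show "\<psi> x (\<sigma> i) = \<psi> v (\<sigma> i)" using uv(5) by simp
  qed
  define j0 :: "nat \<Rightarrow> nat" where "j0 i = (if i = 0 then 1 else 0)" for i
  have j0: "j0 i \<noteq> i" "j0 i < m" for i unfolding j0_def using assms(1) by auto
  define wit where "wit i v = lp x0 i (j0 i) v" for i v
  have witV: "wit i v \<in> csr_vertices m n" if "i < m" "v < n" for i v
    unfolding wit_def using lp_V[OF x0 that(1) j0(2) j0(1)[symmetric] that(2)] .
  have witi: "wit i v i = v" for i v unfolding wit_def using lp_i[OF j0(1)[symmetric]] .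
  define \<psi>s where "\<psi>s i v = \<psi> (wit i v) (\<sigma> i)" for i v
  have P3: "\<psi> x (\<sigma> i) = \<psi>s i (x i)" if "x \<in> csr_vertices m n" "i < m" for x i
  proof -
    have "x i < n" using that by (simp add: inV)
    then show ?thesis unfolding \<psi>s_def using key[OF that(1) witV[OF that(2)] that(2)] witi by simp
  qed
  have P1: "bij_betw (\<psi>s i) {..<n} {..<n}" if i: "i < m" for i
  proof -
    have sub: "\<psi>s i ` {..<n} \<subseteq> {..<n}"
    proof
      fix w assume "w \<in> \<psi>s i ` {..<n}"
      then obtain v where v: "v < n" "w = \<psi>s i v" by auto
      have "\<psi> (wit i v) \<in> csr_vertices m n" using aut_V[OF f witV[OF i v(1)]] .
      then show "w \<in> {..<n}" using v \<sigma>m[OF i] unfolding \<psi>s_def by (simp add: inV)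
    qed
    have sup: "{..<n} \<subseteq> \<psi>s i ` {..<n}"
    proof
      fix w assume "w \<in> {..<n}"
      then have w: "w < n" by simp
      have "wit (\<sigma> i) w \<in> csr_vertices m n" using witV[OF \<sigma>m[OF i] w] .
      then obtain x' where x': "x' \<in> csr_vertices m n" "\<psi> x' = wit (\<sigma> i) w" using aut_surj[OF f] by blast
      have "\<psi>s i (x' i) = w" using P3[OF x'(1) i] x'(2) witi by simp
      moreover have "x' i < n" using x'(1) i by (simp add: inV)
      ultimately show "w \<in> \<psi>s i ` {..<n}" by force
    qed
    have "inj_on (\<psi>s i) {..<n}" using finite_surj_inj[OF _ sup] by simp
    then show ?thesis using sub sup by (simp add: bij_betw_def)
  qed
  show ?thesis using P1 \<sigma>bij P3 by blast
qed

end
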